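(* Let $(G,w)$, $(G',w')$ be loopless vertex-weighted graphs of genus $g$ and $g'$ respectively, and let $\phi:(G,w)\to(G',w')$ be a pseudo-harmonic indexed morphism. Then, writing $v'=\phi(v)$, $$2g-2=\deg(\phi)(2g'-2)+\sum_{v\in V(G)}2\big(M_\phi(v)-1+w(v)-M_\phi(v)w'(v')\big)-\sum_{v\in V(G)}\sum_{e\in E_v(G)}(r_\phi(e)-1)$$ $$=\deg(\phi)(2g'-2)+\sum_{v\in V(G)}2\big(M_\phi(v)-1+w(v)-M_\phi(v)w'(v')\big)+\sum_{v\in V(G)}\big(val(v)-M_\phi(v)val(v')\big).$$
   Context: A vertex-weighted graph $(G,w)$ is a finite connected loopless multigraph $G$ with $w:V(G)\to\mathbb{Z}_{\ge0}$; its genus is $g(G,w)=|E(G)|-|V(G)|+1+\sum_{v}w(v)$. $E_v(G)$ is the set of edges incident to $v$ and $val(v)=|E_v(G)|$. A morphism $\phi:G\to G'$ is a map $V(G)\cup E(G)\to V(G')\cup E(G')$ with $\phi(V(G))\subseteq V(G')$ such that each edge $e$ with endpoints $v_1,v_2$ is mapped either to an edge with endpoints $\phi(v_1),\phi(v_2)$ or to the vertex $\phi(v_1)=\phi(v_2)$. An indexed morphism assigns to every $e\in E(G)$ an integer $r_\phi(e)\ge0$, with $r_\phi(e)=0$ iff $\phi(e)$ is a vertex. It is pseudo-harmonic if for every $v\in V(G)$ there is $M_\phi(v)$ such that $M_\phi(v)=\sum_{e\in E(G),\,v\in e,\,\phi(e)=e'}r_\phi(e)$ for every $e'\in E(G')$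 incident to $\phi(v)$. Its degree is $\deg(\phi)=\sum_{e\in E(G),\phi(e)=e'}r_\phi(e)$ for any $e'\in E(G')$. *)

theory Defs
  imports Main
begin

text \<open>A loopless multigraph is given by a vertex set V, an edge set E and an
endpoint map ends assigning to each edge its (two-element) set of endpoints.\<close>

definition adj :: "'e set \<Rightarrow> ('e \<Rightarrow> 'v set) \<Rightarrow> ('v \<times> 'v) set" where
  "adj E ends = {(a, b). \<exists>e\<in>E. ends e = {a, b}}"

definition loopless_graph :: "'v set \<Rightarrow> 'e set \<Rightarrow> ('e \<Rightarrow> 'v set) \<Rightarrow> bool" where
  "loopless_graph V E ends \<longleftrightarrow> finite V \<and> finite E \<and> V \<noteq> {} \<and>
     (\<forall>e\<in>E. ends e \<subseteq> V \<and> card (ends e) = 2) \<and>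
     (\<forall>u\<in>V. \<forall>v\<in>V. (u, v) \<in> (adj E ends)\<^sup>*)"

definition genus :: "'v set \<Rightarrow> 'e set \<Rightarrow> ('v \<Rightarrow> nat) \<Rightarrow> int" where
  "genus V E w = int (card E) - int (card V) + 1 + int (\<Sum>v\<in>V. w v)"

definition edges_at :: "'e set \<Rightarrow> ('e \<Rightarrow> 'v set) \<Rightarrow> 'v \<Rightarrow> 'e set" where
  "edges_at E ends v = {e\<in>E. v \<in> ends e}"

definition val :: "'e set \<Rightarrow> ('e \<Rightarrow> 'v set) \<Rightarrow> 'v \<Rightarrow> nat" where
  "val E ends v = card (edges_at E ends v)"

text \<open>A morphism: vertex map fv and a map fe sending each edge either to a vertex
(Inl) or to an edge (Inr) of the target.\<close>
definition graph_morphism ::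
  "'v set \<Rightarrow> 'e set \<Rightarrow> ('e \<Rightarrow> 'v set) \<Rightarrow> 'w set \<Rightarrow> 'f set \<Rightarrow> ('f \<Rightarrow> 'w set)
   \<Rightarrow> ('v \<Rightarrow> 'w) \<Rightarrow> ('e \<Rightarrow> 'w + 'f) \<Rightarrow> bool" where
  "graph_morphism V E ends V' E' ends' fv fe \<longleftrightarrow>
     fv ` V \<subseteq> V' \<and>
     (\<forall>e\<in>E. (\<exists>e'\<in>E'. fe e = Inr e' \<and> ends' e' = fv ` ends e) \<or>
             (\<exists>v'\<in>V'. fe e = Inl v' \<and> (\<forall>x\<in>ends e. fv x = v')))"

definition indexed_morphism ::
  "'v set \<Rightarrow> 'e set \<Rightarrow> ('e \<Rightarrow> 'v set) \<Rightarrow> 'w set \<Rightarrow> 'f set \<Rightarrow> ('f \<Rightarrow> 'w set)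
   \<Rightarrow> ('v \<Rightarrow> 'w) \<Rightarrow> ('e \<Rightarrow> 'w + 'f) \<Rightarrow> ('e \<Rightarrow> nat) \<Rightarrow> bool" where
  "indexed_morphism V E ends V' E' ends' fv fe r \<longleftrightarrow>
     graph_morphism V E ends V' E' ends' fv fe \<and>
     (\<forall>e\<in>E. r e = 0 \<longleftrightarrow> isl (fe e))"

definition loc_sum ::
  "'e set \<Rightarrow> ('e \<Rightarrow> 'v set) \<Rightarrow> ('e \<Rightarrow> 'w + 'f) \<Rightarrow> ('e \<Rightarrow> nat) \<Rightarrow> 'v \<Rightarrow> 'f \<Rightarrow> nat" where
  "loc_sum E ends fe r v e' = (\<Sum>e\<in>{e\<in>E. v \<in> ends e \<and> fe e = Inr e'}. r e)"

definition pseudo_harmonic ::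
  "'v set \<Rightarrow> 'e set \<Rightarrow> ('e \<Rightarrow> 'v set) \<Rightarrow> 'w set \<Rightarrow> 'f set \<Rightarrow> ('f \<Rightarrow> 'w set)
   \<Rightarrow> ('v \<Rightarrow> 'w) \<Rightarrow> ('e \<Rightarrow> 'w + 'f) \<Rightarrow> ('e \<Rightarrow> nat) \<Rightarrow> bool" where
  "pseudo_harmonic V E ends V' E' ends' fv fe r \<longleftrightarrow>
     indexed_morphism V E ends V' E' ends' fv fe r \<and>
     (\<forall>v\<in>V. \<exists>M. \<forall>e'\<in>E'. fv v \<in> ends' e' \<longrightarrow> loc_sum E ends fe r v e' = M)"

text \<open>M_phi(v): the common value, computed at some edge of G' incident to phi(v).\<close>
definition M_phi ::
  "'e set \<Rightarrow> ('e \<Rightarrow> 'v set) \<Rightarrow> 'f set \<Rightarrow> ('f \<Rightarrow> 'w set)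
   \<Rightarrow> ('v \<Rightarrow> 'w) \<Rightarrow> ('e \<Rightarrow> 'w + 'f) \<Rightarrow> ('e \<Rightarrow> nat) \<Rightarrow> 'v \<Rightarrow> nat" where
  "M_phi E ends E' ends' fv fe r v =
     loc_sum E ends fe r v (SOME e'. e' \<in> E' \<and> fv v \<in> ends' e')"

definition deg_phi ::
  "'e set \<Rightarrow> 'f set \<Rightarrow> ('e \<Rightarrow> 'w + 'f) \<Rightarrow> ('e \<Rightarrow> nat) \<Rightarrow> nat" where
  "deg_phi E E' fe r = (\<Sum>e\<in>{e\<in>E. fe e = Inr (SOME e'. e' \<in> E')}. r e)"

end

theory Submission
  imports Defs
begin

lemma handshake:
  fixes f :: "'e \<Rightarrow> int"
  assumes "finite V" "finite E" "\<forall>e\<in>E. ends e \<subseteq> V \<and> card (ends e) = 2"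
  shows "(\<Sum>v\<in>V. \<Sum>e\<in>edges_at E ends v. f e) = (\<Sum>e\<in>E. 2 * f e)"
proof -
  have "(\<Sum>v\<in>V. \<Sum>e\<in>edges_at E ends v. f e) = (\<Sum>v\<in>V. \<Sum>e\<in>{e. e\<in>E \<and> v \<in> ends e}. f e)"
    unfolding edges_at_def by simp
  also have "\<dots> = (\<Sum>e\<in>E. \<Sum>v\<in>{v. v\<in>V \<and> v \<in> ends e}. f e)"
    by (rule sum.swap_restrict[OF assms(1,2)])
  also have "\<dots> = (\<Sum>e\<in>E. 2 * f e)"
  proof (rule sum.cong[OF refl])
    fix e assume "e \<in> E"
    then have "{v. v\<in>V \<and> v \<in> ends e} = ends e" "card (ends e) = 2" using assms(3) by auto
    then show "(\<Sum>v\<in>{v. v\<in>V \<and> v \<in> ends e}. f e) = 2 * f e" by simp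
  qed
  finally show ?thesis .
qed

lemma val_sum:
  assumes "finite V" "finite E" "\<forall>e\<in>E. ends e \<subseteq> V \<and> card (ends e) = 2"
  shows "(\<Sum>v\<in>V. int (val E ends v)) = 2 * int (card E)"
proof -
  have "(\<Sum>v\<in>V. int (val E ends v)) = (\<Sum>v\<in>V. \<Sum>e\<in>edges_at E ends v. (1::int))"
    unfolding val_def by simp
  also have "\<dots> = (\<Sum>e\<in>E. 2 * (1::int))" by (rule handshake[OF assms])
  finally show ?thesis by simp
qed

lemma incident_edge:
  assumes "loopless_graph V E ends" "E \<noteq> {}" "x \<in> V"
  shows "\<exists>e\<in>E. x \<in> ends e"
proof -
  from assms obtain e0 where e0: "e0 \<in> E" by auto
  with assms(1) have c: "card (ends e0) = 2" and s: "ends e0 \<subseteq> V" unfolding loopless_graph_def by auto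
  then obtain a b where ab: "ends e0 = {a, b}" "a \<noteq> b" by (meson card_2_iff)
  then have "\<exists>y\<in>V. y \<noteq> x" using s by auto
  then obtain y where y: "y \<in> V" "y \<noteq> x" by auto
  with assms(1,3) have "(x, y) \<in> (adj E ends)\<^sup>*" unfolding loopless_graph_def by auto
  then obtain z where "(x, z) \<in> adj E ends" using y(2) by (metis converse_rtranclE)
  then show ?thesis unfolding adj_def by auto
qed


theorem theorem4p8:
  fixes V :: "'v set" and E :: "'e set" and ends :: "'e \<Rightarrow> 'v set" and w :: "'v \<Rightarrow> nat"
    and V' :: "'w set" and E' :: "'f set" and ends' :: "'f \<Rightarrow> 'w set" and w' :: "'w \<Rightarrow> nat"
    and fv :: "'v \<Rightarrow> 'w" and fe :: "'e \<Rightarrow> 'w + 'f" and r :: "'e \<Rightarrow> nat"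
  assumes "loopless_graph V E ends"
    and "loopless_graph V' E' ends'"
    and "E' \<noteq> {}"
    and "pseudo_harmonic V E ends V' E' ends' fv fe r"
  defines "M \<equiv> M_phi E ends E' ends' fv fe r"
    and "d \<equiv> int (deg_phi E E' fe r)"
  shows "(2 * genus V E w - 2 =
           d * (2 * genus V' E' w' - 2)
           + (\<Sum>v\<in>V. 2 * (int (M v) - 1 + int (w v) - int (M v) * int (w' (fv v))))
           - (\<Sum>v\<in>V. \<Sum>e\<in>edges_at E ends v. (int (r e) - 1))) \<and>
         (2 * genus V E w - 2 =
           d * (2 * genus V' E' w' - 2)
           + (\<Sum>v\<in>V. 2 * (int (M v) - 1 + int (w v) - int (M v) * int (w' (fv v))))
           + (\<Sum>v\<in>V. (int (val E ends v) - int (M v) * int (val E' ends' (fv v)))))"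
proof -
  note G1 = assms(1)[unfolded loopless_graph_def]
  note G2 = assms(2)[unfolded loopless_graph_def]
  have fV: "finite V" and fE: "finite E" and eV: "\<forall>e\<in>E. ends e \<subseteq> V \<and> card (ends e) = 2"
    using G1 by auto
  have fV': "finite V'" and fE': "finite E'" and eV': "\<forall>e\<in>E'. ends' e \<subseteq> V' \<and> card (ends' e) = 2"
    and conn': "\<forall>u\<in>V'. \<forall>v\<in>V'. (u, v) \<in> (adj E' ends')\<^sup>*"
    using G2 by auto
  have fvV: "fv ` V \<subseteq> V'" and
    morph: "\<forall>e\<in>E. (\<exists>e'\<in>E'. fe e = Inr e' \<and> ends' e' = fv ` ends e) \<or>
             (\<exists>v'\<in>V'. fe e = Inl v' \<and> (\<forall>x\<in>ends e. fv x = v'))"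
    and rz: "\<forall>e\<in>E. r e = 0 \<longleftrightarrow> isl (fe e)"
    and harm: "\<forall>v\<in>V. \<exists>M. \<forall>e'\<in>E'. fv v \<in> ends' e' \<longrightarrow> loc_sum E ends fe r v e' = M"
    using assms(4) unfolding pseudo_harmonic_def indexed_morphism_def graph_morphism_def by auto
  define D where "D e' = (\<Sum>e\<in>{e\<in>E. fe e = Inr e'}. r e)" for e'
  define N where "N v' = (\<Sum>v\<in>{v\<in>V. fv v = v'}. M v)" for v'
  have A: "loc_sum E ends fe r v e' = M v" if v: "v \<in> V" and e': "e' \<in> E'" "fv v \<in> ends' e'" for v e'
  proof -
    obtain Mv where Mv: "\<forall>e'\<in>E'. fv v \<in> ends' e' \<longrightarrow> loc_sum E ends fe r v e' = Mv"
      using harm v by auto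
    have "\<exists>e'. e' \<in> E' \<and> fv v \<in> ends' e'" using e' by auto
    then have "(SOME e'. e' \<in> E' \<and> fv v \<in> ends' e') \<in> E' \<and> fv v \<in> ends' (SOME e'. e' \<in> E' \<and> fv v \<in> ends' e')"
      by (rule someI_ex)
    then have "M v = Mv" unfolding M_def M_phi_def using Mv by auto
    then show ?thesis using Mv e' by auto
  qed
  have B: "D e' = (\<Sum>v\<in>{v\<in>V. fv v = v'}. loc_sum E ends fe r v e')" if e': "e' \<in> E'" "v' \<in> ends' e'" for e' v'
  proof -
    have "(\<Sum>v\<in>{v\<in>V. fv v = v'}. loc_sum E ends fe r v e')
        = (\<Sum>v\<in>{v\<in>V. fv v = v'}. \<Sum>e\<in>{e. e\<in>E \<and> (v \<in> ends e \<and> fe e = Inr e')}. r e)"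
      unfolding loc_sum_def by simp
    also have "\<dots> = (\<Sum>e\<in>E. \<Sum>v\<in>{v. v\<in>{v\<in>V. fv v = v'} \<and> (v \<in> ends e \<and> fe e = Inr e')}. r e)"
      by (rule sum.swap_restrict) (use fV fE in auto)
    also have "\<dots> = (\<Sum>e\<in>E. if fe e = Inr e' then r e else 0)"
    proof (rule sum.cong[OF refl])
      fix e assume e: "e \<in> E"
      show "(\<Sum>v\<in>{v. v\<in>{v\<in>V. fv v = v'} \<and> (v \<in> ends e \<and> fe e = Inr e')}. r e) = (if fe e = Inr e' then r e else 0)"
      proof (cases "fe e = Inr e'")
        case True
        with morph e have im: "ends' e' = fv ` ends e" by auto
        obtain a b where ab: "ends e = {a, b}" "a \<noteq> b" using eV e by (meson card_2_iff)
        have "card (ends' e') = 2" using eV' e' by auto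
        then have "fv a \<noteq> fv b" using im ab by auto
        moreover have "v' = fv a \<or> v' = fv b" using im ab e' by auto
        moreover have "a \<in> V" "b \<in> V" using eV e ab by auto
        ultimately have "{v. v\<in>{v\<in>V. fv v = v'} \<and> (v \<in> ends e \<and> fe e = Inr e')} = {a} \<or>
             {v. v\<in>{v\<in>V. fv v = v'} \<and> (v \<in> ends e \<and> fe e = Inr e')} = {b}"
          using ab True by auto
        then show ?thesis using True by auto
      qed simp
    qed
    also have "\<dots> = D e'" unfolding D_def by (simp add: sum.inter_filter[OF fE])
    finally show ?thesis by simp
  qed
  have C: "D e' = N v'" if e': "e' \<in> E'" "v' \<in> ends' e'" for e' v'
  proof -
    have "D e' = (\<Sum>v\<in>{v\<in>V. fv v = v'}. loc_sum E ends fe r v e')" using B e' .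
    also have "\<dots> = N v'" unfolding N_def
      by (rule sum.cong[OF refl]) (use A e' in auto)
    finally show ?thesis .
  qed
  have Nconst: "N a = N b" if "(a, b) \<in> (adj E' ends')\<^sup>*" for a b
    using that
  proof (induction rule: rtrancl_induct)
    case base then show ?case by simp
  next
    case (step y z)
    then obtain e' where "e' \<in> E'" "ends' e' = {y, z}" unfolding adj_def by auto
    then have "D e' = N y" "D e' = N z" using C by auto
    then show ?case using step by simp
  qed
  define e0 where "e0 = (SOME e'. e' \<in> E')"
  have e0: "e0 \<in> E'" unfolding e0_def using assms(3) by (simp add: some_in_eq)
  then obtain v0 where v0: "v0 \<in> ends' e0" using eV' by fastforce
  have v0V: "v0 \<in> V'" using v0 e0 eV' by auto
  define d0 where "d0 = D e0"
  have dd: "d = int d0" unfolding d_def d0_def D_def deg_phi_def e0_def by simp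
  have Nd: "N a = d0" if "a \<in> V'" for a
    using Nconst[of a v0] conn' that v0V C[OF e0 v0] d0_def by auto
  have Dd: "D e' = d0" if ee: "e' \<in> E'" for e'
  proof -
    obtain x where "x \<in> ends' e'" using eV' ee by fastforce
    then show ?thesis using C[OF ee] Nd eV' ee by auto
  qed
  have grp: "(\<Sum>v\<in>V. M v * h (fv v)) = d0 * (\<Sum>v'\<in>V'. h v')" for h :: "'w \<Rightarrow> nat"
  proof -
    have "(\<Sum>v\<in>V. M v * h (fv v)) = (\<Sum>v'\<in>V'. \<Sum>v\<in>{v. v\<in>V \<and> fv v = v'}. M v * h (fv v))"
      by (rule sum.group[symmetric]) (use fV fV' fvV in auto)
    also have "\<dots> = (\<Sum>v'\<in>V'. N v' * h v')"
      unfolding N_def sum_distrib_right by (rule sum.cong[OF refl]) auto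
    also have "\<dots> = (\<Sum>v'\<in>V'. d0 * h v')" using Nd by simp
    finally show ?thesis by (simp add: sum_distrib_left)
  qed
  have sM: "(\<Sum>v\<in>V. M v) = d0 * card V'" using grp[of "\<lambda>_. 1"] by simp
  have sMw: "(\<Sum>v\<in>V. M v * w' (fv v)) = d0 * (\<Sum>v'\<in>V'. w' v')" using grp[of w'] by simp
  have sMval: "(\<Sum>v\<in>V. M v * val E' ends' (fv v)) = d0 * (2 * card E')"
  proof -
    have "(\<Sum>v'\<in>V'. int (val E' ends' v')) = 2 * int (card E')" by (rule val_sum[OF fV' fE' eV'])
    then have "(\<Sum>v'\<in>V'. val E' ends' v') = 2 * card E'" by (simp add: of_nat_sum[symmetric] del: of_nat_sum)
    then show ?thesis using grp[of "val E' ends'"] by simp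
  qed
  have sr: "(\<Sum>e\<in>E. r e) = d0 * card E'"
  proof -
    have "(\<Sum>e\<in>E. r e) = (\<Sum>e\<in>{e\<in>E. \<not> isl (fe e)}. r e)"
      by (simp add: sum.inter_filter[OF fE]) (rule sum.cong, use rz in auto)
    also have "\<dots> = (\<Sum>e'\<in>E'. \<Sum>e\<in>{e. e\<in>{e\<in>E. \<not> isl (fe e)} \<and> projr (fe e) = e'}. r e)"
      by (rule sum.group[symmetric]) (use fE fE' morph in auto)
    also have "\<dots> = (\<Sum>e'\<in>E'. D e')" unfolding D_def
      
    proof (rule sum.cong[OF refl])
      fix e' assume "e' \<in> E'"
      have "{e. e\<in>{e\<in>E. \<not> isl (fe e)} \<and> projr (fe e) = e'} = {e\<in>E. fe e = Inr e'}"
      proof (intro set_eqI iffI)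
        fix e assume "e \<in> {e. e\<in>{e\<in>E. \<not> isl (fe e)} \<and> projr (fe e) = e'}"
        then show "e \<in> {e\<in>E. fe e = Inr e'}" by (cases "fe e") auto
      next
        fix e assume "e \<in> {e\<in>E. fe e = Inr e'}"
        then show "e \<in> {e. e\<in>{e\<in>E. \<not> isl (fe e)} \<and> projr (fe e) = e'}" by auto
      qed
      then show "(\<Sum>e\<in>{e. e\<in>{e\<in>E. \<not> isl (fe e)} \<and> projr (fe e) = e'}. r e) = (\<Sum>e\<in>{e\<in>E. fe e = Inr e'}. r e)"
        by simp
    qed
    also have "\<dots> = (\<Sum>e'\<in>E'. d0)" using Dd by simp
    finally show ?thesis by simp
  qed
  have h1: "(\<Sum>v\<in>V. \<Sum>e\<in>edges_at E ends v. (int (r e) - 1)) = (\<Sum>e\<in>E. 2 * (int (r e) - 1))"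
    by (rule handshake[OF fV fE eV])
  have h2: "(\<Sum>v\<in>V. int (val E ends v)) = 2 * int (card E)" by (rule val_sum[OF fV fE eV])
  have i1: "(\<Sum>e\<in>E. 2 * (int (r e) - 1)) = 2 * int d0 * int (card E') - 2 * int (card E)"
  proof -
    have a: "(\<Sum>e\<in>E. int (r e)) = int d0 * int (card E')" using sr by (metis of_nat_sum of_nat_mult)
    have "(\<Sum>e\<in>E. 2 * (int (r e) - 1)) = 2 * (\<Sum>e\<in>E. int (r e)) - 2 * int (card E)"
      by (simp add: sum_subtractf sum_distrib_left right_diff_distrib)
    then show ?thesis using a by simp
  qed
  have i2: "(\<Sum>v\<in>V. 2 * (int (M v) - 1 + int (w v) - int (M v) * int (w' (fv v))))
     = 2 * int d0 * int (card V') - 2 * int (card V) + 2 * int (\<Sum>v\<in>V. w v) - 2 * int d0 * int (\<Sum>v'\<in>V'. w' v')"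
  proof -
    have "(\<Sum>v\<in>V. 2 * (int (M v) - 1 + int (w v) - int (M v) * int (w' (fv v))))
       = 2 * (int (\<Sum>v\<in>V. M v) - int (card V) + int (\<Sum>v\<in>V. w v) - int (\<Sum>v\<in>V. M v * w' (fv v)))"
      by (simp add: sum_subtractf sum.distrib sum_distrib_left[symmetric] of_nat_sum)
    then show ?thesis using sM sMw by (simp add: algebra_simps)
  qed
  have i3: "(\<Sum>v\<in>V. (int (val E ends v) - int (M v) * int (val E' ends' (fv v))))
     = 2 * int (card E) - 2 * int d0 * int (card E')"
  proof -
    have "(\<Sum>v\<in>V. (int (val E ends v) - int (M v) * int (val E' ends' (fv v))))
       = (\<Sum>v\<in>V. int (val E ends v)) - int (\<Sum>v\<in>V. M v * val E' ends' (fv v))"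
      by (simp add: sum_subtractf of_nat_sum)
    then show ?thesis using h2 sMval by simp
  qed
  show ?thesis unfolding genus_def dd h1 i1 i2 i3 by (simp add: algebra_simps)
qed

end
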